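(* Let $(D,S,t_{\max})$ and $(D',S',t'_{\max})$ both satisfy the standing assumptions below with the same initial moment $t_{\min}$, and let $0\le k_{\min}<k_{\max}$. If their far-field patterns satisfy $w^\infty(\hat x,k)=w'^\infty(\hat x,k)$ for all $\hat x\in\mathbb S^2$ and all $k\in[k_{\min},k_{\max}]$, then $\mathrm{ch}(D)=\mathrm{ch}(D')$, where $\mathrm{ch}$ denotes the convex hull.
   Context: Standing assumptions on $(D,S,t_{\max})$: $D\subset\mathbb R^3$ is a bounded Lipschitz domain (open, connected) with $\mathbb R^3\setminus\overline D$ connected; $0\le t_{\min}<t_{\max}$; $S\in C([t_{\min},t_{\max}];L^\infty(D))$ is real-valued with $S\ge c_0>0$ a.e. on $D\times[t_{\min},t_{\max}]$ for some $c_0>0$. Far-field pattern: $w^\infty(\hat x,k)=\frac{1}{\sqrt{2\pi}}\int_{t_{\min}}^{t_{\max}}\int_D e^{{\rm i}k(t-\hat x\cdot y)}S(y,t)\,dy\,dt$, $\hat x\in\mathbb S^2$, $k\in\mathbb R$. *)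

theory Defs
  imports "HOL-Analysis.Analysis"
begin

definition lipschitz_domain :: "(real^3) set \<Rightarrow> bool" where
  "lipschitz_domain D \<longleftrightarrow>
     D \<noteq> {} \<and> open D \<and> connected D \<and> bounded D \<and>
     (\<forall>x\<in>frontier D. \<exists>r>0. \<exists>R::real^3 \<Rightarrow> real^3. \<exists>g::real \<times> real \<Rightarrow> real. \<exists>L.
        orthogonal_transformation R \<and> L-lipschitz_on UNIV g \<and>
        D \<inter> ball x r =
          {y \<in> ball x r. (R (y - x)) $ 3 < g ((R (y - x)) $ 1, (R (y - x)) $ 2)})"

text \<open>S y t is a representative of the source;
for every t, S(.,t) is a Lebesgue-measurable essentially bounded function on D (an element of
L^infinity(D)), t maps continuously into L^infinity(D), and S >= c0 > 0 a.e.\<close>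
definition standing :: "(real^3) set \<Rightarrow> (real^3 \<Rightarrow> real \<Rightarrow> real) \<Rightarrow> real \<Rightarrow> real \<Rightarrow> bool" where
  "standing D S tmin tmax \<longleftrightarrow>
     lipschitz_domain D \<and> connected (- closure D) \<and> 0 \<le> tmin \<and> tmin < tmax \<and>
     (\<forall>t\<in>{tmin..tmax}. (\<lambda>y. S y t) \<in> borel_measurable (lebesgue_on D) \<and>
        (\<exists>B. AE y in lebesgue_on D. \<bar>S y t\<bar> \<le> B)) \<and>
     (\<forall>t\<in>{tmin..tmax}. \<forall>e>0. \<exists>d>0. \<forall>s\<in>{tmin..tmax}. \<bar>s - t\<bar> < d \<longrightarrow>
        (AE y in lebesgue_on D. \<bar>S y s - S y t\<bar> \<le> e)) \<and>
     (\<exists>c0>0. \<forall>t\<in>{tmin..tmax}. AE y in lebesgue_on D. c0 \<le> S y t)"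

definition far_field ::
  "(real^3) set \<Rightarrow> (real^3 \<Rightarrow> real \<Rightarrow> real) \<Rightarrow> real \<Rightarrow> real \<Rightarrow> real^3 \<Rightarrow> real \<Rightarrow> complex" where
  "far_field D S tmin tmax xh k =
     complex_of_real (1 / sqrt (2 * pi)) *
     (LINT t:{tmin..tmax}|lebesgue.
        (LINT y:D|lebesgue. exp (\<i> * complex_of_real (k * (t - xh \<bullet> y))) * complex_of_real (S y t)))"

end

theory Submission
  imports Defs "HOL-Complex_Analysis.Complex_Analysis"
begin


lemma unif_bound:
  assumes st: "standing D S tmin tmax"
  shows "\<exists>B. \<forall>t\<in>{tmin..tmax}. AE y in lebesgue_on D. \<bar>S y t\<bar> \<le> B"
proof -
  have h1: "\<forall>t\<in>{tmin..tmax}. \<exists>B. AE y in lebesgue_on D. \<bar>S y t\<bar> \<le> B"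
    using st unfolding standing_def by blast
  have h2: "\<forall>t\<in>{tmin..tmax}. \<exists>d>0. \<forall>s\<in>{tmin..tmax}. \<bar>s - t\<bar> < d \<longrightarrow>
        (AE y in lebesgue_on D. \<bar>S y s - S y t\<bar> \<le> 1)"
    using st unfolding standing_def by (meson zero_less_one)
  obtain Bf where Bf0: "\<forall>t\<in>{tmin..tmax}. AE y in lebesgue_on D. \<bar>S y t\<bar> \<le> Bf t"
    using bchoice[OF h1] by blast
  have Bf: "AE y in lebesgue_on D. \<bar>S y t\<bar> \<le> Bf t" if "t\<in>{tmin..tmax}" for t
    using Bf0 that by blast
  obtain df where df0: "\<forall>t\<in>{tmin..tmax}. df t > 0 \<and> (\<forall>s\<in>{tmin..tmax}. \<bar>s - t\<bar> < df t \<longrightarrow>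
        (AE y in lebesgue_on D. \<bar>S y s - S y t\<bar> \<le> 1))"
    using bchoice[OF h2] by blast
  have df: "df t > 0 \<and> (\<forall>s\<in>{tmin..tmax}. \<bar>s - t\<bar> < df t \<longrightarrow>
        (AE y in lebesgue_on D. \<bar>S y s - S y t\<bar> \<le> 1))" if "t\<in>{tmin..tmax}" for t
    using df0 that by blast
  have cov: "{tmin..tmax} \<subseteq> (\<Union>t\<in>{tmin..tmax}. ball t (df t))"
    using df by force
  obtain C where C: "C \<subseteq> {tmin..tmax}" "finite C" "{tmin..tmax} \<subseteq> (\<Union>t\<in>C. ball t (df t))"
    using compactE_image[OF compact_Icc _ cov] by auto
  define B where "B = (\<Sum>t\<in>C. \<bar>Bf t\<bar> + 1)"
  show ?thesis
  proof (intro exI ballI)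
    fix s assume s: "s \<in> {tmin..tmax}"
    then obtain t where t: "t \<in> C" "s \<in> ball t (df t)" using C by blast
    have tT: "t \<in> {tmin..tmax}" using t C by blast
    have le: "\<bar>Bf t\<bar> + 1 \<le> B" unfolding B_def
      by (rule member_le_sum) (use t C in auto)
    have "\<bar>s - t\<bar> < df t" using t by (simp add: dist_real_def abs_minus_commute)
    then have "AE y in lebesgue_on D. \<bar>S y s - S y t\<bar> \<le> 1" using df[OF tT] s by blast
    with Bf[OF tT] show "AE y in lebesgue_on D. \<bar>S y s\<bar> \<le> B"
      by eventually_elim (use le in linarith)
  qed
qed



lemma standing_basic:
  assumes "standing D S tmin tmax"
  shows "D \<in> sets lebesgue" "bounded D" "D \<in> lmeasurable" "finite_measure (lebesgue_on D)"
    "open D" "D \<noteq> {}" "tmin < tmax"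
proof -
  show o: "open D" and b: "bounded D" "D \<noteq> {}" "tmin < tmax"
    using assms unfolding standing_def lipschitz_domain_def by auto
  show l: "D \<in> sets lebesgue" using o by auto
  show m: "D \<in> lmeasurable" by (rule bounded_set_imp_lmeasurable[OF b(1) l])
  show "finite_measure (lebesgue_on D)" using m by (rule finite_measure_lebesgue_on)
qed

lemma standing_cont:
  assumes "standing D S tmin tmax" "t \<in> {tmin..tmax}" "e > 0"
  shows "\<exists>d>0. \<forall>s\<in>{tmin..tmax}. \<bar>s - t\<bar> < d \<longrightarrow>
        (AE y in lebesgue_on D. \<bar>S y s - S y t\<bar> \<le> e)"
proof -
  have "\<forall>t\<in>{tmin..tmax}. \<forall>e>0. \<exists>d>0. \<forall>s\<in>{tmin..tmax}. \<bar>s - t\<bar> < d \<longrightarrow>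
        (AE y in lebesgue_on D. \<bar>S y s - S y t\<bar> \<le> e)"
    using assms(1) unfolding standing_def by blast
  then show ?thesis using assms(2,3) by blast
qed

lemma set_int_restrict:
  fixes f :: "'a::euclidean_space \<Rightarrow> 'b::{banach,second_countable_topology}"
  assumes "A \<in> sets lebesgue"
  shows "(LINT y:A|lebesgue. f y) = integral\<^sup>L (lebesgue_on A) f"
  unfolding set_lebesgue_integral_def using integral_restrict_space[of A lebesgue f] assms by simp

lemma cont_bound:
  fixes g :: "real \<Rightarrow> complex"
  assumes "continuous_on UNIV g"
  shows "\<exists>K>0. \<forall>s. \<bar>s\<bar> \<le> M \<longrightarrow> norm (g s) \<le> K"
proof -
  have "compact (g ` {-M..M})"
    by (rule compact_continuous_image) (use assms continuous_on_subset in auto)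
  then obtain K where "K>0" "\<forall>z\<in>g ` {-M..M}. norm z \<le> K"
    using compact_imp_bounded bounded_pos by metis
  then show ?thesis by (intro exI[of _ K]) (auto simp: abs_le_iff)
qed

lemma tau_bound:
  assumes "bounded (D :: (real^3) set)"
  shows "\<exists>M. \<forall>y\<in>D. \<forall>t\<in>{a..b}. \<bar>t - u \<bullet> y\<bar> \<le> M"
proof -
  obtain R where R: "\<forall>y\<in>D. norm y \<le> R" using assms bounded_pos by metis
  show ?thesis
  proof (intro exI ballI)
    fix y t assume y: "y \<in> D" and t: "t \<in> {a..b}"
    have "\<bar>u \<bullet> y\<bar> \<le> norm u * norm y" by (rule Cauchy_Schwarz_ineq2)
    also have "\<dots> \<le> norm u * R" using R y by (simp add: mult_left_mono)
    finally have "\<bar>u \<bullet> y\<bar> \<le> norm u * R" .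
    moreover have "\<bar>t\<bar> \<le> \<bar>a\<bar> + \<bar>b\<bar>" using t by auto
    ultimately show "\<bar>t - u \<bullet> y\<bar> \<le> \<bar>a\<bar> + \<bar>b\<bar> + norm u * R" by linarith
  qed
qed

lemma meas_integrand:
  fixes g :: "real \<Rightarrow> complex"
  assumes st: "standing D S tmin tmax" and g: "continuous_on UNIV g" and t: "t \<in> {tmin..tmax}"
  shows "(\<lambda>y. g (t - u \<bullet> y) * complex_of_real (S y t)) \<in> borel_measurable (lebesgue_on D)"
proof -
  have "(\<lambda>y. S y t) \<in> borel_measurable (lebesgue_on D)"
    using st t unfolding standing_def by blast
  then have m1: "(\<lambda>y. complex_of_real (S y t)) \<in> borel_measurable (lebesgue_on D)"
    by measurable
  have "continuous_on D (\<lambda>y. g (t - u \<bullet> y))"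
    by (rule continuous_on_compose2[OF g]) (auto intro!: continuous_intros)
  then have m2: "(\<lambda>y. g (t - u \<bullet> y)) \<in> borel_measurable (lebesgue_on D)"
    using standing_basic(1)[OF st] by (rule continuous_imp_measurable_on_sets_lebesgue)
  show ?thesis using m1 m2 by (rule borel_measurable_times[rotated])
qed

lemma integrable_integrand:
  fixes g :: "real \<Rightarrow> complex"
  assumes st: "standing D S tmin tmax" and g: "continuous_on UNIV g" and t: "t \<in> {tmin..tmax}"
  shows "integrable (lebesgue_on D) (\<lambda>y. g (t - u \<bullet> y) * complex_of_real (S y t))"
proof -
  interpret finite_measure "lebesgue_on D" using standing_basic(4)[OF st] .
  obtain M where M: "\<forall>y\<in>D. \<forall>t\<in>{tmin..tmax}. \<bar>t - u \<bullet> y\<bar> \<le> M"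
    using tau_bound[OF standing_basic(2)[OF st]] by blast
  obtain K where K: "K > 0" "\<forall>s. \<bar>s\<bar> \<le> M \<longrightarrow> norm (g s) \<le> K" using cont_bound[OF g] by blast
  obtain B where B: "AE y in lebesgue_on D. \<bar>S y t\<bar> \<le> B" using unif_bound[OF st] t by blast
  have sp: "space (lebesgue_on D) = D" using standing_basic(1)[OF st] by simp
  have "AE y in lebesgue_on D. norm (g (t - u \<bullet> y) * complex_of_real (S y t)) \<le> K * B"
    using B
  proof (rule AE_mp, intro AE_I2 impI)
    fix y assume y: "y \<in> space (lebesgue_on D)" and h: "\<bar>S y t\<bar> \<le> B"
    have "norm (g (t - u \<bullet> y)) \<le> K" using K M y t sp by auto
    then show "norm (g (t - u \<bullet> y) * complex_of_real (S y t)) \<le> K * B"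
      using h K(1) by (simp add: norm_mult) (intro mult_mono, auto)
  qed
  then show ?thesis by (rule integrable_const_bound) (rule meas_integrand[OF st g t])
qed



lemma cont_inner:
  fixes g :: "real \<Rightarrow> complex"
  assumes st: "standing D S tmin tmax" and g: "continuous_on UNIV g"
  shows "continuous_on {tmin..tmax}
           (\<lambda>t. integral\<^sup>L (lebesgue_on D) (\<lambda>y. g (t - u \<bullet> y) * complex_of_real (S y t)))"
proof -
  interpret finite_measure "lebesgue_on D" using standing_basic(4)[OF st] .
  have sp: "space (lebesgue_on D) = D" using standing_basic(1)[OF st] by simp
  obtain M where M: "\<forall>y\<in>D. \<forall>t\<in>{tmin..tmax}. \<bar>t - u \<bullet> y\<bar> \<le> M"
    using tau_bound[OF standing_basic(2)[OF st]] by blast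
  obtain K where K: "K > 0" "\<forall>s. \<bar>s\<bar> \<le> M \<longrightarrow> norm (g s) \<le> K" using cont_bound[OF g] by blast
  have uc: "uniformly_continuous_on {-M..M} g"
    by (rule compact_uniformly_continuous) (use g continuous_on_subset in auto)
  obtain B0 where B0: "\<forall>t\<in>{tmin..tmax}. AE y in lebesgue_on D. \<bar>S y t\<bar> \<le> B0"
    using unif_bound[OF st] by blast
  define B where "B = max B0 1"
  have Bpos: "B > 0" unfolding B_def by simp
  have BB: "AE y in lebesgue_on D. \<bar>S y t\<bar> \<le> B" if "t \<in> {tmin..tmax}" for t
  proof -
    have a: "AE y in lebesgue_on D. \<bar>S y t\<bar> \<le> B0" using B0 that by blast
    show ?thesis using a by eventually_elim (simp add: B_def)
  qed
  define \<mu> where "\<mu> = measure (lebesgue_on D) (space (lebesgue_on D))"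
  have mu0: "\<mu> \<ge> 0" unfolding \<mu>_def by simp
  define F where "F t = integral\<^sup>L (lebesgue_on D) (\<lambda>y. g (t - u \<bullet> y) * complex_of_real (S y t))" for t
  show ?thesis unfolding continuous_on_iff F_def[symmetric]
  proof (intro ballI allI impI)
    fix t e :: real assume t: "t \<in> {tmin..tmax}" and e: "e > 0"
    define e1 where "e1 = e / (4 * (B + 1) * (\<mu> + 1))"
    define e2 where "e2 = e / (4 * (K + 1) * (\<mu> + 1))"
    have e1: "e1 > 0" unfolding e1_def using e Bpos mu0 by simp
    have e2: "e2 > 0" unfolding e2_def using e K mu0 by simp
    obtain d1 where d1: "d1 > 0" "\<forall>x\<in>{-M..M}. \<forall>x'\<in>{-M..M}. dist x' x < d1 \<longrightarrow> dist (g x') (g x) < e1"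
    proof -
      have "\<exists>d>0. \<forall>x\<in>{-M..M}. \<forall>x'\<in>{-M..M}. dist x' x < d \<longrightarrow> dist (g x') (g x) < e1"
        using uc e1 unfolding uniformly_continuous_on_def by blast
      then show ?thesis using that by blast
    qed
    obtain d2 where d2: "d2 > 0" "\<forall>s\<in>{tmin..tmax}. \<bar>s - t\<bar> < d2 \<longrightarrow>
        (AE y in lebesgue_on D. \<bar>S y s - S y t\<bar> \<le> e2)"
      using standing_cont[OF st t e2] by blast
    show "\<exists>d>0. \<forall>s\<in>{tmin..tmax}. dist s t < d \<longrightarrow> dist (F s) (F t) < e"
    proof (intro exI[of _ "min d1 d2"] conjI ballI impI)
      show "min d1 d2 > 0" using d1 d2 by simp
      fix s assume s: "s \<in> {tmin..tmax}" and ds: "dist s t < min d1 d2"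
      have i1: "integrable (lebesgue_on D) (\<lambda>y. g (s - u \<bullet> y) * complex_of_real (S y s))"
        by (rule integrable_integrand[OF st g s])
      have i2: "integrable (lebesgue_on D) (\<lambda>y. g (t - u \<bullet> y) * complex_of_real (S y t))"
        by (rule integrable_integrand[OF st g t])
      have eq: "F s - F t = integral\<^sup>L (lebesgue_on D)
          (\<lambda>y. g (s - u \<bullet> y) * complex_of_real (S y s) - g (t - u \<bullet> y) * complex_of_real (S y t))"
        unfolding F_def by (rule Bochner_Integration.integral_diff[OF i1 i2, symmetric])
      define c where "c = e1 * B + K * e2"
      have ae: "AE y in lebesgue_on D. norm (g (s - u \<bullet> y) * complex_of_real (S y s) -
                  g (t - u \<bullet> y) * complex_of_real (S y t)) \<le> c"
        using BB[OF s] d2(2) s ds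
      proof -
        have "\<bar>s - t\<bar> < d2" using ds by (simp add: dist_real_def)
        then have a2: "AE y in lebesgue_on D. \<bar>S y s - S y t\<bar> \<le> e2" using d2 s by blast
        show ?thesis using AE_space BB[OF s] a2
        proof (eventually_elim)
          case (elim y)
          have y: "y \<in> D" using elim(1) sp by simp
          have Ms: "\<bar>s - u \<bullet> y\<bar> \<le> M" and Mt: "\<bar>t - u \<bullet> y\<bar> \<le> M" using M y s t by auto
          have "dist (s - u \<bullet> y) (t - u \<bullet> y) < d1" using ds by (simp add: dist_real_def)
          then have gd: "norm (g (s - u \<bullet> y) - g (t - u \<bullet> y)) < e1"
            using d1(2) Ms Mt by (auto simp: dist_norm abs_le_iff)
          have gt: "norm (g (t - u \<bullet> y)) \<le> K" using K Mt by auto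
          have "g (s - u \<bullet> y) * complex_of_real (S y s) - g (t - u \<bullet> y) * complex_of_real (S y t)
              = (g (s - u \<bullet> y) - g (t - u \<bullet> y)) * complex_of_real (S y s)
                + g (t - u \<bullet> y) * complex_of_real (S y s - S y t)"
            by (simp add: algebra_simps)
          also have "norm \<dots> \<le> norm (g (s - u \<bullet> y) - g (t - u \<bullet> y)) * \<bar>S y s\<bar>
                + norm (g (t - u \<bullet> y)) * \<bar>S y s - S y t\<bar>"
            by (rule order_trans[OF norm_triangle_ineq]) (simp add: norm_mult flip: of_real_diff)
          also have "\<dots> \<le> e1 * B + K * e2"
            by (intro add_mono mult_mono) (use gd gt elim e1 K in auto)
          finally show ?case unfolding c_def .
        qed
      qed
      have "norm (F s - F t) \<le> integral\<^sup>L (lebesgue_on D) (\<lambda>y. norm (g (s - u \<bullet> y) * complex_of_real (S y s) -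
                  g (t - u \<bullet> y) * complex_of_real (S y t)))"
        unfolding eq by (rule integral_norm_bound)
      also have "\<dots> \<le> integral\<^sup>L (lebesgue_on D) (\<lambda>y. c)"
        by (rule integral_mono_AE[OF _ _ ae]) (use i1 i2 in auto)
      also have "\<dots> = \<mu> * c" unfolding \<mu>_def by simp
      also have "\<dots> < e"
      proof -
        have h1: "\<mu> * B \<le> (B + 1) * (\<mu> + 1)" using mu0 Bpos by (simp add: algebra_simps)
        have "\<mu> * (e1 * B) = e1 * (\<mu> * B)" by simp
        also have "\<dots> \<le> e1 * ((B + 1) * (\<mu> + 1))" using h1 e1 by (intro mult_left_mono) auto
        also have "\<dots> = e / 4"
        proof -
          have X: "(B + 1) * (\<mu> + 1) > 0" using Bpos mu0 by (intro mult_pos_pos) auto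
          have "e1 = (e / 4) / ((B + 1) * (\<mu> + 1))" unfolding e1_def by (simp add: mult.assoc)
          moreover have "(B + 1) * (\<mu> + 1) \<noteq> 0" using X by (metis less_irrefl)
          ultimately show ?thesis using nonzero_eq_divide_eq by blast
        qed
        finally have a: "\<mu> * (e1 * B) \<le> e / 4" .
        have h2: "\<mu> * K \<le> (K + 1) * (\<mu> + 1)" using mu0 K by (simp add: algebra_simps)
        have "\<mu> * (K * e2) = e2 * (\<mu> * K)" by simp
        also have "\<dots> \<le> e2 * ((K + 1) * (\<mu> + 1))" using h2 e2 by (intro mult_left_mono) auto
        also have "\<dots> = e / 4"
        proof -
          have X: "(K + 1) * (\<mu> + 1) > 0" using K mu0 by (intro mult_pos_pos) auto
          have "e2 = (e / 4) / ((K + 1) * (\<mu> + 1))" unfolding e2_def by (simp add: mult.assoc)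
          moreover have "(K + 1) * (\<mu> + 1) \<noteq> 0" using X by (metis less_irrefl)
          ultimately show ?thesis using nonzero_eq_divide_eq by blast
        qed
        finally have b: "\<mu> * (K * e2) \<le> e / 4" .
        show ?thesis unfolding c_def using a b e by (simp add: distrib_left)
      qed
      finally show "dist (F s) (F t) < e" by (simp add: dist_norm)
    qed
  qed
qed




definition II :: "(real^3) set \<Rightarrow> (real^3 \<Rightarrow> real \<Rightarrow> real) \<Rightarrow> real^3 \<Rightarrow> (real \<Rightarrow> complex) \<Rightarrow> real \<Rightarrow> complex"
  where "II D S u g t = integral\<^sup>L (lebesgue_on D) (\<lambda>y. g (t - u \<bullet> y) * complex_of_real (S y t))"

definition JJ :: "(real^3) set \<Rightarrow> (real^3 \<Rightarrow> real \<Rightarrow> real) \<Rightarrow> real \<Rightarrow> real \<Rightarrow> real^3 \<Rightarrow> (real \<Rightarrow> complex) \<Rightarrow> complex"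
  where "JJ D S tmin tmax u g = integral\<^sup>L (lebesgue_on {tmin..tmax}) (II D S u g)"

lemma cont_integrable_Icc:
  fixes f :: "real \<Rightarrow> complex"
  assumes "continuous_on {a..b} f"
  shows "integrable (lebesgue_on {a..b}) f"
proof -
  interpret finite_measure "lebesgue_on {a..b}" by (rule finite_measure_lebesgue_on) simp
  have "compact (f ` {a..b})" by (rule compact_continuous_image[OF assms]) simp
  then obtain K where K: "\<forall>z\<in>f ` {a..b}. norm z \<le> K" using compact_imp_bounded bounded_pos by metis
  show ?thesis
  proof (rule integrable_const_bound[where B=K])
    show "AE x in lebesgue_on {a..b}. norm (f x) \<le> K" using K by (intro AE_I2) auto
    show "f \<in> borel_measurable (lebesgue_on {a..b})"
      by (rule continuous_imp_measurable_on_sets_lebesgue[OF assms]) simp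
  qed
qed

lemma II_integrable:
  fixes g :: "real \<Rightarrow> complex"
  assumes st: "standing D S tmin tmax" and g: "continuous_on UNIV g"
  shows "integrable (lebesgue_on {tmin..tmax}) (II D S u g)"
  unfolding II_def by (rule cont_integrable_Icc[OF cont_inner[OF st g]])

lemma II_bound:
  fixes g :: "real \<Rightarrow> complex"
  assumes st: "standing D S tmin tmax" and g: "continuous_on UNIV g" and t: "t \<in> {tmin..tmax}"
    and K: "\<forall>y\<in>D. norm (g (t - u \<bullet> y)) \<le> K" "K \<ge> 0"
    and B: "AE y in lebesgue_on D. \<bar>S y t\<bar> \<le> B"
  shows "norm (II D S u g t) \<le> measure (lebesgue_on D) D * (K * B)"
proof -
  have sp: "space (lebesgue_on D) = D" using standing_basic(1)[OF st] by simp
  have i1: "integrable (lebesgue_on D) (\<lambda>y. g (t - u \<bullet> y) * complex_of_real (S y t))"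
    by (rule integrable_integrand[OF st g t])
  have ae: "AE y in lebesgue_on D. norm (g (t - u \<bullet> y) * complex_of_real (S y t)) \<le> K * B"
    using AE_space B
  proof eventually_elim
    case (elim y)
    then have "norm (g (t - u \<bullet> y)) \<le> K" using K sp by auto
    then show ?case using elim K(2) by (simp add: norm_mult) (intro mult_mono, auto)
  qed
  have "norm (II D S u g t) \<le> integral\<^sup>L (lebesgue_on D) (\<lambda>y. norm (g (t - u \<bullet> y) * complex_of_real (S y t)))"
    unfolding II_def by (rule integral_norm_bound)
  also have "\<dots> \<le> integral\<^sup>L (lebesgue_on D) (\<lambda>y. K * B)"
  proof (rule integral_mono_AE[OF _ _ ae])
    show "integrable (lebesgue_on D) (\<lambda>y. norm (g (t - u \<bullet> y) * complex_of_real (S y t)))"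
      using i1 by auto
    show "integrable (lebesgue_on D) (\<lambda>y. K * B)"
      using standing_basic(4)[OF st] finite_measure.integrable_const by blast
  qed
  also have "\<dots> = measure (lebesgue_on D) D * (K * B)" using sp by simp
  finally show ?thesis .
qed

lemma norm_exp_partial:
  fixes z :: complex
  shows "norm (\<Sum>n<N. z ^ n /\<^sub>R fact n) \<le> exp (norm z)"
proof -
  have "norm (\<Sum>n<N. z ^ n /\<^sub>R fact n) \<le> (\<Sum>n<N. norm (z ^ n /\<^sub>R fact n))"
    by (rule norm_sum)
  also have "\<dots> \<le> (\<Sum>n. norm (z ^ n /\<^sub>R fact n))"
    by (rule sum_le_suminf[OF summable_norm_exp]) auto
  also have "\<dots> = (\<Sum>n. (norm z) ^ n /\<^sub>R fact n)"
    by (simp add: norm_power)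
  also have "\<dots> = exp (norm z)" using exp_converges[of "norm z"] by (simp add: sums_iff)
  finally show ?thesis .
qed




lemma cont_gN: "continuous_on UNIV (\<lambda>s::real. \<Sum>n<N. (w * complex_of_real s) ^ n /\<^sub>R fact n)"
  by (intro continuous_intros)

lemma cont_pow: "continuous_on UNIV (\<lambda>s::real. complex_of_real (s ^ n))"
  by (intro continuous_intros)

lemma cont_expw: "continuous_on UNIV (\<lambda>s::real. exp (w * complex_of_real s))"
  by (intro continuous_intros)

lemma term_eq: "(w * complex_of_real s) ^ n /\<^sub>R fact n * c = (w ^ n /\<^sub>R fact n) * (complex_of_real (s ^ n) * c)"
  by (simp add: power_mult_distrib scaleR_conv_of_real mult_ac)

lemma JJ_sum:
  assumes st: "standing D S tmin tmax"
  shows "JJ D S tmin tmax u (\<lambda>s. \<Sum>n<N. (w * complex_of_real s) ^ n /\<^sub>R fact n)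
       = (\<Sum>n<N. (w ^ n /\<^sub>R fact n) * JJ D S tmin tmax u (\<lambda>s. complex_of_real (s ^ n)))"
proof -
  have inner: "II D S u (\<lambda>s. \<Sum>n<N. (w * complex_of_real s) ^ n /\<^sub>R fact n) t
      = (\<Sum>n<N. (w ^ n /\<^sub>R fact n) * II D S u (\<lambda>s. complex_of_real (s ^ n)) t)"
    if t: "t \<in> {tmin..tmax}" for t
  proof -
    have "II D S u (\<lambda>s. \<Sum>n<N. (w * complex_of_real s) ^ n /\<^sub>R fact n) t
        = integral\<^sup>L (lebesgue_on D) (\<lambda>y. \<Sum>n<N. (w ^ n /\<^sub>R fact n) *
             (complex_of_real ((t - u \<bullet> y) ^ n) * complex_of_real (S y t)))"
      unfolding II_def
      by (rule Bochner_Integration.integral_cong[OF refl])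
         (subst sum_distrib_right, rule sum.cong[OF refl], rule term_eq)
    also have "\<dots> = (\<Sum>n<N. integral\<^sup>L (lebesgue_on D) (\<lambda>y. (w ^ n /\<^sub>R fact n) *
             (complex_of_real ((t - u \<bullet> y) ^ n) * complex_of_real (S y t))))"
      by (rule Bochner_Integration.integral_sum)
         (intro integrable_mult_right integrable_integrand[OF st cont_pow t])
    also have "\<dots> = (\<Sum>n<N. (w ^ n /\<^sub>R fact n) * II D S u (\<lambda>s. complex_of_real (s ^ n)) t)"
      unfolding II_def by simp
    finally show ?thesis .
  qed
  have "JJ D S tmin tmax u (\<lambda>s. \<Sum>n<N. (w * complex_of_real s) ^ n /\<^sub>R fact n)
      = integral\<^sup>L (lebesgue_on {tmin..tmax})
          (\<lambda>t. \<Sum>n<N. (w ^ n /\<^sub>R fact n) * II D S u (\<lambda>s. complex_of_real (s ^ n)) t)"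
    unfolding JJ_def by (rule Bochner_Integration.integral_cong) (auto simp: inner)
  also have "\<dots> = (\<Sum>n<N. integral\<^sup>L (lebesgue_on {tmin..tmax})
          (\<lambda>t. (w ^ n /\<^sub>R fact n) * II D S u (\<lambda>s. complex_of_real (s ^ n)) t))"
    by (rule Bochner_Integration.integral_sum)
       (intro integrable_mult_right II_integrable[OF st cont_pow])
  also have "\<dots> = (\<Sum>n<N. (w ^ n /\<^sub>R fact n) * JJ D S tmin tmax u (\<lambda>s. complex_of_real (s ^ n)))"
    unfolding JJ_def by simp
  finally show ?thesis .
qed

lemma JJ_lim:
  assumes st: "standing D S tmin tmax"
  shows "(\<lambda>N. JJ D S tmin tmax u (\<lambda>s. \<Sum>n<N. (w * complex_of_real s) ^ n /\<^sub>R fact n))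
           \<longlonglongrightarrow> JJ D S tmin tmax u (\<lambda>s. exp (w * complex_of_real s))"
proof -
  interpret fD: finite_measure "lebesgue_on D" using standing_basic(4)[OF st] .
  interpret fT: finite_measure "lebesgue_on {tmin..tmax}" by (rule finite_measure_lebesgue_on) simp
  have spD: "space (lebesgue_on D) = D" using standing_basic(1)[OF st] by simp
  have spT: "space (lebesgue_on {tmin..tmax}) = {tmin..tmax}" by simp
  obtain M where M: "\<forall>y\<in>D. \<forall>t\<in>{tmin..tmax}. \<bar>t - u \<bullet> y\<bar> \<le> M"
    using tau_bound[OF standing_basic(2)[OF st]] by blast
  obtain B where B: "\<forall>t\<in>{tmin..tmax}. AE y in lebesgue_on D. \<bar>S y t\<bar> \<le> B"
    using unif_bound[OF st] by blast
  define K where "K = exp (norm w * M)"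
  have K0: "K \<ge> 0" unfolding K_def by simp
  define gN where "gN N s = (\<Sum>n<N. (w * complex_of_real s) ^ n /\<^sub>R fact n)" for N s
  have gNb: "norm (gN N (t - u \<bullet> y)) \<le> K" if "y \<in> D" "t \<in> {tmin..tmax}" for N y t
  proof -
    have "norm (gN N (t - u \<bullet> y)) \<le> exp (norm (w * complex_of_real (t - u \<bullet> y)))"
      unfolding gN_def by (rule norm_exp_partial)
    also have "\<dots> \<le> K" unfolding K_def using M that
      by (auto simp: norm_mult simp flip: of_real_diff intro!: mult_left_mono)
    finally show ?thesis .
  qed
  have gNlim: "(\<lambda>N. gN N s) \<longlonglongrightarrow> exp (w * complex_of_real s)" for s
    unfolding gN_def using exp_converges[of "w * complex_of_real s"] by (simp add: sums_def)
  define C where "C = measure (lebesgue_on D) D * (K * B)"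
  have inner_lim: "(\<lambda>N. II D S u (gN N) t) \<longlonglongrightarrow> II D S u (\<lambda>s. exp (w * complex_of_real s)) t"
    if t: "t \<in> {tmin..tmax}" for t
    unfolding II_def
  proof (rule integral_dominated_convergence[where w = "\<lambda>y. K * B"])
    show "(\<lambda>y. exp (w * complex_of_real (t - u \<bullet> y)) * complex_of_real (S y t)) \<in> borel_measurable (lebesgue_on D)"
      by (rule meas_integrand[OF st cont_expw t])
    show "(\<lambda>y. gN i (t - u \<bullet> y) * complex_of_real (S y t)) \<in> borel_measurable (lebesgue_on D)" for i
      unfolding gN_def by (rule meas_integrand[OF st cont_gN t])
    show "integrable (lebesgue_on D) (\<lambda>y. K * B)" by simp
    show "AE y in lebesgue_on D. (\<lambda>i. gN i (t - u \<bullet> y) * complex_of_real (S y t)) \<longlonglongrightarrow>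
           exp (w * complex_of_real (t - u \<bullet> y)) * complex_of_real (S y t)"
      by (intro AE_I2 tendsto_mult_right gNlim)
    show "AE y in lebesgue_on D. norm (gN i (t - u \<bullet> y) * complex_of_real (S y t)) \<le> K * B" for i
      using AE_space bspec[OF B t]
    proof (eventually_elim)
      case (elim y)
      then have "norm (gN i (t - u \<bullet> y)) \<le> K" using gNb spD t by auto
      then show ?case using elim K0 t by (simp add: norm_mult) (intro mult_mono, auto)
    qed
  qed
  show ?thesis
    unfolding JJ_def gN_def[symmetric]
  proof (rule integral_dominated_convergence[where w = "\<lambda>t. C"])
    show "II D S u (\<lambda>s. exp (w * complex_of_real s)) \<in> borel_measurable (lebesgue_on {tmin..tmax})"
      unfolding II_def by (rule continuous_imp_measurable_on_sets_lebesgue[OF cont_inner[OF st cont_expw]]) simp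
    show "II D S u (gN i) \<in> borel_measurable (lebesgue_on {tmin..tmax})" for i
      unfolding II_def gN_def by (rule continuous_imp_measurable_on_sets_lebesgue[OF cont_inner[OF st cont_gN]]) simp
    show "integrable (lebesgue_on {tmin..tmax}) (\<lambda>t. C)" by simp
    show "AE t in lebesgue_on {tmin..tmax}. (\<lambda>i. II D S u (gN i) t) \<longlonglongrightarrow> II D S u (\<lambda>s. exp (w * complex_of_real s)) t"
      by (rule AE_I2) (use inner_lim spT in auto)
    show "AE t in lebesgue_on {tmin..tmax}. norm (II D S u (gN i) t) \<le> C" for i
    proof (rule AE_I2)
      fix t assume "t \<in> space (lebesgue_on {tmin..tmax})"
      then have t: "t \<in> {tmin..tmax}" by simp
      show "norm (II D S u (gN i) t) \<le> C" unfolding C_def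
        by (rule II_bound[OF st _ t _ K0]) (use gNb t B in \<open>auto simp: gN_def intro: cont_gN\<close>)
    qed
  qed
qed

definition mom where "mom D S tmin tmax u n = JJ D S tmin tmax u (\<lambda>s. complex_of_real (s ^ n))"
definition Phi where "Phi D S tmin tmax u w = JJ D S tmin tmax u (\<lambda>s. exp (w * complex_of_real s))"

lemma Phi_sums:
  assumes st: "standing D S tmin tmax"
  shows "(\<lambda>n. (mom D S tmin tmax u n /\<^sub>R fact n) * w ^ n) sums Phi D S tmin tmax u w"
proof -
  have "(\<Sum>n<N. (mom D S tmin tmax u n /\<^sub>R fact n) * w ^ n)
      = JJ D S tmin tmax u (\<lambda>s. \<Sum>n<N. (w * complex_of_real s) ^ n /\<^sub>R fact n)" for N
    unfolding JJ_sum[OF st] mom_def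
    by (rule sum.cong) (auto simp: scaleR_conv_of_real algebra_simps)
  then show ?thesis unfolding sums_def Phi_def using JJ_lim[OF st] by simp
qed




lemma Phi_suminf:
  assumes st: "standing D S tmin tmax"
  shows "Phi D S tmin tmax u w = (\<Sum>n. (mom D S tmin tmax u n /\<^sub>R fact n) * w ^ n)"
  using Phi_sums[OF st] by (simp add: sums_iff)

lemma Phi_holo:
  assumes st: "standing D S tmin tmax"
  shows "Phi D S tmin tmax u holomorphic_on UNIV"
proof -
  have s: "summable (\<lambda>n. (mom D S tmin tmax u n /\<^sub>R fact n) * y ^ n)" for y
    using Phi_sums[OF st] by (simp add: sums_iff)
  have e: "Phi D S tmin tmax u = (\<lambda>w. \<Sum>n. (mom D S tmin tmax u n /\<^sub>R fact n) * w ^ n)"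
    using Phi_suminf[OF st] by auto
  show ?thesis unfolding e holomorphic_on_open[OF open_UNIV]
    using termdiffs_strong_converges_everywhere[OF s] by blast
qed

lemma Phi_eq_all:
  assumes st: "standing D S tmin tmax" and st': "standing D' S' tmin' tmax'"
    and k: "kmin < kmax"
    and eq: "\<forall>k\<in>{kmin..kmax}. Phi D S tmin tmax u (\<i> * of_real k) = Phi D' S' tmin' tmax' u (\<i> * of_real k)"
  shows "Phi D S tmin tmax u w = Phi D' S' tmin' tmax' u w"
proof -
  define f where "f z = Phi D S tmin tmax u z - Phi D' S' tmin' tmax' u z" for z
  have hf: "f holomorphic_on UNIV" unfolding f_def
    by (intro holomorphic_on_diff Phi_holo st st')
  define U where "U = (\<lambda>k. \<i> * complex_of_real k) ` {kmin..kmax}"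
  have lim: "\<i> * complex_of_real kmin islimpt U"
    unfolding islimpt_approachable
  proof (intro allI impI)
    fix e :: real assume e: "e > 0"
    define k where "k = kmin + min (e/2) (kmax - kmin)"
    have kk: "k \<in> {kmin..kmax}" "k \<noteq> kmin" "\<bar>k - kmin\<bar> < e" unfolding k_def using e k by auto
    have d: "dist (\<i> * complex_of_real k) (\<i> * complex_of_real kmin) = \<bar>k - kmin\<bar>"
    proof -
      have "\<i> * complex_of_real k - \<i> * complex_of_real kmin = \<i> * complex_of_real (k - kmin)"
        by (simp add: algebra_simps)
      then show ?thesis by (simp only: dist_norm norm_mult norm_ii norm_of_real) simp
    qed
    show "\<exists>x'\<in>U. x' \<noteq> \<i> * complex_of_real kmin \<and> dist x' (\<i> * complex_of_real kmin) < e"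
      using kk d unfolding U_def by (intro bexI[of _ "\<i> * complex_of_real k"]) auto
  qed
  have "f w = 0"
  proof (rule analytic_continuation[OF hf open_UNIV connected_UNIV _ _ lim])
    show "z \<in> U \<Longrightarrow> f z = 0" for z using eq unfolding U_def f_def by auto
  qed auto
  then show ?thesis unfolding f_def by simp
qed




definition rin where "rin D S u \<sigma> t = integral\<^sup>L (lebesgue_on D) (\<lambda>y. exp (\<sigma> * (t - u \<bullet> y)) * S y t)"
definition RR where "RR D S tmin tmax u \<sigma> = integral\<^sup>L (lebesgue_on {tmin..tmax}) (rin D S u \<sigma>)"

lemma exp_cr: "exp (complex_of_real \<sigma> * complex_of_real s) * complex_of_real c = complex_of_real (exp (\<sigma> * s) * c)"
  by (metis exp_of_real of_real_mult)

lemma II_real: "II D S u (\<lambda>s. exp (complex_of_real \<sigma> * complex_of_real s)) t = complex_of_real (rin D S u \<sigma> t)"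
  unfolding II_def rin_def exp_cr by (rule integral_complex_of_real)

lemma rin_integrable_D:
  assumes st: "standing D S tmin tmax" and t: "t \<in> {tmin..tmax}"
  shows "integrable (lebesgue_on D) (\<lambda>y. exp (\<sigma> * (t - u \<bullet> y)) * S y t)"
proof -
  have "integrable (lebesgue_on D) (\<lambda>y. exp (complex_of_real \<sigma> * complex_of_real (t - u \<bullet> y)) * complex_of_real (S y t))"
    by (rule integrable_integrand[OF st cont_expw t])
  then show ?thesis unfolding exp_cr complex_of_real_integrable_eq .
qed

lemma rin_integrable_T:
  assumes st: "standing D S tmin tmax"
  shows "integrable (lebesgue_on {tmin..tmax}) (rin D S u \<sigma>)"
proof -
  have "integrable (lebesgue_on {tmin..tmax}) (II D S u (\<lambda>s. exp (complex_of_real \<sigma> * complex_of_real s)))"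
    by (rule II_integrable[OF st cont_expw])
  then show ?thesis unfolding II_real complex_of_real_integrable_eq .
qed

lemma Phi_real: "Phi D S tmin tmax u (complex_of_real \<sigma>) = complex_of_real (RR D S tmin tmax u \<sigma>)"
  unfolding Phi_def JJ_def RR_def II_real by simp

lemma dot_bdd:
  assumes "bounded (D :: (real^3) set)"
  shows "bdd_above ((\<lambda>y. u \<bullet> y) ` D)"
proof -
  obtain R where R: "\<forall>y\<in>D. norm y \<le> R" using assms bounded_pos by metis
  show ?thesis
  proof (rule bdd_aboveI2)
    fix y assume "y \<in> D"
    have "u \<bullet> y \<le> norm u * norm y" by (metis Cauchy_Schwarz_ineq2 abs_le_D1)
    also have "\<dots> \<le> norm u * R" using R \<open>y \<in> D\<close> by (simp add: mult_left_mono)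
    finally show "u \<bullet> y \<le> norm u * R" .
  qed
qed

lemma upper_bound:
  assumes st: "standing D S tmin tmax"
  shows "\<exists>C. \<forall>\<sigma>\<ge>0. RR D S tmin tmax u (-\<sigma>) \<le> C * exp (\<sigma> * (Sup ((\<lambda>y. u \<bullet> y) ` D) - tmin))"
proof -
  interpret fD: finite_measure "lebesgue_on D" using standing_basic(4)[OF st] .
  interpret fT: finite_measure "lebesgue_on {tmin..tmax}" by (rule finite_measure_lebesgue_on) simp
  have spD: "space (lebesgue_on D) = D" using standing_basic(1)[OF st] by simp
  define h where "h = Sup ((\<lambda>y. u \<bullet> y) ` D)"
  have hy: "u \<bullet> y \<le> h" if "y \<in> D" for y
    unfolding h_def by (rule cSup_upper) (use that dot_bdd[OF standing_basic(2)[OF st]] in auto)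
  obtain B0 where B0: "\<forall>t\<in>{tmin..tmax}. AE y in lebesgue_on D. \<bar>S y t\<bar> \<le> B0"
    using unif_bound[OF st] by blast
  define B where "B = max B0 0"
  define muD where "muD = measure (lebesgue_on D) D"
  define muT where "muT = measure (lebesgue_on {tmin..tmax}) {tmin..tmax}"
  show ?thesis
  proof (intro exI[of _ "muT * (muD * B)"] allI impI)
    fix \<sigma> :: real assume s0: "\<sigma> \<ge> 0"
    define E where "E = exp (\<sigma> * (h - tmin))"
    have E0: "E \<ge> 0" unfolding E_def by simp
    have inner: "rin D S u (-\<sigma>) t \<le> muD * (E * B)" if t: "t \<in> {tmin..tmax}" for t
    proof -
      have "rin D S u (-\<sigma>) t \<le> integral\<^sup>L (lebesgue_on D) (\<lambda>y. E * B)"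
        unfolding rin_def
      proof (rule integral_mono_AE)
        show "integrable (lebesgue_on D) (\<lambda>y. exp (- \<sigma> * (t - u \<bullet> y)) * S y t)"
          by (rule rin_integrable_D[OF st t])
        show "integrable (lebesgue_on D) (\<lambda>y. E * B)" by simp
        show "AE y in lebesgue_on D. exp (- \<sigma> * (t - u \<bullet> y)) * S y t \<le> E * B"
          using AE_space bspec[OF B0 t]
        proof eventually_elim
          case (elim y)
          then have y: "y \<in> D" using spD by simp
          have "- \<sigma> * (t - u \<bullet> y) \<le> \<sigma> * (h - tmin)"
            using hy[OF y] t s0 by (simp add: mult_left_mono flip: mult_minus_right)
          then have ex: "exp (- \<sigma> * (t - u \<bullet> y)) \<le> E" unfolding E_def by simp
          have "exp (- \<sigma> * (t - u \<bullet> y)) * S y t \<le> exp (- \<sigma> * (t - u \<bullet> y)) * \<bar>S y t\<bar>"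
            by (intro mult_left_mono) auto
          also have "\<dots> \<le> E * B" using ex elim E0 unfolding B_def
            by (intro mult_mono) auto
          finally show ?case .
        qed
      qed
      also have "\<dots> = muD * (E * B)" unfolding muD_def using spD by simp
      finally show ?thesis .
    qed
    have "RR D S tmin tmax u (-\<sigma>) \<le> integral\<^sup>L (lebesgue_on {tmin..tmax}) (\<lambda>t. muD * (E * B))"
      unfolding RR_def
      by (rule integral_mono[OF rin_integrable_T[OF st]]) (use inner in auto)
    also have "\<dots> = muT * (muD * (E * B))" unfolding muT_def by simp
    also have "\<dots> = muT * (muD * B) * exp (\<sigma> * (Sup ((\<lambda>y. u \<bullet> y) ` D) - tmin))"
      unfolding E_def h_def by simp
    finally show "RR D S tmin tmax u (-\<sigma>) \<le> muT * (muD * B) * exp (\<sigma> * (Sup ((\<lambda>y. u \<bullet> y) ` D) - tmin))" .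
  qed
qed




lemma lower_bound:
  assumes st: "standing D S tmin tmax" and e: "e > 0"
  shows "\<exists>c>0. \<forall>\<sigma>\<ge>0. c * exp (\<sigma> * (Sup ((\<lambda>y. u \<bullet> y) ` D) - tmin - e)) \<le> RR D S tmin tmax u (-\<sigma>)"
proof -
  interpret fD: finite_measure "lebesgue_on D" using standing_basic(4)[OF st] .
  interpret fT: finite_measure "lebesgue_on {tmin..tmax}" by (rule finite_measure_lebesgue_on) simp
  have Dl: "D \<in> sets lebesgue" using standing_basic(1)[OF st] .
  have spD: "space (lebesgue_on D) = D" using Dl by simp
  have spT: "space (lebesgue_on {tmin..tmax}) = {tmin..tmax}" by simp
  have tt: "tmin < tmax" using standing_basic(7)[OF st] .
  define h where "h = Sup ((\<lambda>y. u \<bullet> y) ` D)"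
  have bdd: "bdd_above ((\<lambda>y. u \<bullet> y) ` D)" by (rule dot_bdd[OF standing_basic(2)[OF st]])
  have "h - e/2 < h" using e by simp
  then obtain y0 where y0: "y0 \<in> D" "h - e/2 < u \<bullet> y0"
    unfolding h_def using less_cSup_iff[OF _ bdd] standing_basic(6)[OF st] by auto
  define U where "U = D \<inter> {y. u \<bullet> y > h - e/2}"
  have Uo: "open U" unfolding U_def by (intro open_Int standing_basic(5)[OF st] open_halfspace_gt)
  have Une: "U \<noteq> {}" using y0 unfolding U_def by auto
  have UD: "U \<subseteq> D" unfolding U_def by auto
  have Ul: "U \<in> sets lebesgue" using Uo by auto
  have Um: "U \<in> lmeasurable"
    by (rule bounded_set_imp_lmeasurable[OF bounded_subset[OF standing_basic(2)[OF st] UD] Ul])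
  have "\<not> negligible U" using Uo Une by (rule open_not_negligible)
  then have "measure lebesgue U \<noteq> 0" using negligible_iff_measure0[OF Um] by simp
  then have mpos0: "measure lebesgue U > 0" by (simp add: order_less_le)
  define m where "m = measure (lebesgue_on D) U"
  have m_eq: "m = measure lebesgue U" unfolding m_def
    by (rule measure_restrict_space) (use Dl UD in auto)
  have mpos: "m > 0" using m_eq mpos0 by simp
  have UsD: "U \<in> sets (lebesgue_on D)" using Dl UD Ul by (simp add: sets_restrict_space_iff)
  have Ufin: "emeasure (lebesgue_on D) U < \<infinity>" by (simp add: fD.emeasure_eq_measure)
  obtain c0 where c0: "c0 > 0" "\<forall>t\<in>{tmin..tmax}. AE y in lebesgue_on D. c0 \<le> S y t"
    using st unfolding standing_def by blast
  define \<delta> where "\<delta> = min (e/2) (tmax - tmin)"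
  have dpos: "\<delta> > 0" unfolding \<delta>_def using e tt by simp
  define I where "I = {tmin..tmin + \<delta>}"
  have IT: "I \<subseteq> {tmin..tmax}" unfolding I_def \<delta>_def by auto
  have Il: "I \<in> sets lebesgue" unfolding I_def by simp
  have mI: "measure (lebesgue_on {tmin..tmax}) I = \<delta>"
  proof -
    have "measure (lebesgue_on {tmin..tmax}) I = measure lebesgue I"
      by (rule measure_restrict_space) (use IT in auto)
    also have "\<dots> = measure lborel I" unfolding I_def by (rule measure_completion) simp
    also have "\<dots> = \<delta>" unfolding I_def using dpos by simp
    finally show ?thesis .
  qed
  have IsT: "I \<in> sets (lebesgue_on {tmin..tmax})" using IT Il by (simp add: sets_restrict_space_iff)
  have Ifin: "emeasure (lebesgue_on {tmin..tmax}) I < \<infinity>" by (simp add: fT.emeasure_eq_measure)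
  show ?thesis
  proof (intro exI[of _ "\<delta> * (m * c0)"] conjI allI impI)
    show "\<delta> * (m * c0) > 0" using dpos mpos c0 by simp
    fix \<sigma> :: real assume s0: "\<sigma> \<ge> 0"
    define E where "E = exp (\<sigma> * (h - tmin - e))"
    have E0: "E > 0" unfolding E_def by simp
    have nonneg: "0 \<le> rin D S u (-\<sigma>) t" if t: "t \<in> {tmin..tmax}" for t
      unfolding rin_def
    proof (rule integral_nonneg_AE)
      show "AE y in lebesgue_on D. 0 \<le> exp (- \<sigma> * (t - u \<bullet> y)) * S y t"
        using bspec[OF c0(2) t] by eventually_elim (use c0(1) in simp)
    qed
    have inner: "m * (E * c0) \<le> rin D S u (-\<sigma>) t" if t: "t \<in> I" for t
    proof -
      have tT: "t \<in> {tmin..tmax}" using t IT by auto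
      have "m * (E * c0) = integral\<^sup>L (lebesgue_on D) (\<lambda>y. indicator U y *\<^sub>R (E * c0))"
        unfolding m_def
        using has_bochner_integral_integral_eq[OF has_bochner_integral_indicator[OF UsD Ufin, of "E * c0"]]
        by (simp add: Int_absorb2[OF UD])
      also have "\<dots> \<le> rin D S u (-\<sigma>) t"
        unfolding rin_def
      proof (rule integral_mono_AE)
        show "integrable (lebesgue_on D) (\<lambda>y. indicator U y *\<^sub>R (E * c0))"
          by (rule integrable_indicator[OF UsD Ufin])
        show "integrable (lebesgue_on D) (\<lambda>y. exp (- \<sigma> * (t - u \<bullet> y)) * S y t)"
          by (rule rin_integrable_D[OF st tT])
        show "AE y in lebesgue_on D. indicator U y *\<^sub>R (E * c0) \<le> exp (- \<sigma> * (t - u \<bullet> y)) * S y t"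
          using bspec[OF c0(2) tT]
        proof eventually_elim
          case (elim y)
          have Sp: "S y t > 0" using elim c0(1) by simp
          show ?case
          proof (cases "y \<in> U")
            case True
            then have "u \<bullet> y > h - e/2" unfolding U_def by simp
            moreover have "t \<le> tmin + e/2" using t unfolding I_def \<delta>_def by auto
            ultimately have "h - tmin - e \<le> u \<bullet> y - t" by simp
            then have "\<sigma> * (h - tmin - e) \<le> \<sigma> * (u \<bullet> y - t)"
              using s0 by (rule mult_left_mono)
            also have "\<dots> = - \<sigma> * (t - u \<bullet> y)" by (simp add: algebra_simps)
            finally have "\<sigma> * (h - tmin - e) \<le> - \<sigma> * (t - u \<bullet> y)" .
            then have ex: "E \<le> exp (- \<sigma> * (t - u \<bullet> y))" unfolding E_def by simp
            have "E * c0 \<le> exp (- \<sigma> * (t - u \<bullet> y)) * S y t"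
              using ex elim E0 c0(1) by (intro mult_mono) auto
            then show ?thesis using True by simp
          next
            case False
            then show ?thesis using Sp by simp
          qed
        qed
      qed
      finally show ?thesis .
    qed
    have "\<delta> * (m * (E * c0)) = integral\<^sup>L (lebesgue_on {tmin..tmax}) (\<lambda>t. indicator I t *\<^sub>R (m * (E * c0)))"
      using has_bochner_integral_integral_eq[OF has_bochner_integral_indicator[OF IsT Ifin, of "m * (E * c0)"]]
      using mI by (simp add: Int_absorb2[OF IT])
    also have "\<dots> \<le> RR D S tmin tmax u (-\<sigma>)"
      unfolding RR_def
    proof (rule integral_mono)
      show "integrable (lebesgue_on {tmin..tmax}) (\<lambda>t. indicator I t *\<^sub>R (m * (E * c0)))"
        by (rule integrable_indicator[OF IsT Ifin])
      show "integrable (lebesgue_on {tmin..tmax}) (rin D S u (- \<sigma>))" by (rule rin_integrable_T[OF st])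
      fix t assume "t \<in> space (lebesgue_on {tmin..tmax})"
      then have tT: "t \<in> {tmin..tmax}" by simp
      show "indicator I t *\<^sub>R (m * (E * c0)) \<le> rin D S u (- \<sigma>) t"
        using inner nonneg[OF tT] by (cases "t \<in> I") auto
    qed
    finally show "\<delta> * (m * c0) * exp (\<sigma> * (Sup ((\<lambda>y. u \<bullet> y) ` D) - tmin - e)) \<le> RR D S tmin tmax u (-\<sigma>)"
      unfolding E_def h_def by (simp add: mult_ac)
  qed
qed




lemma sup_le:
  assumes st: "standing D S tmin tmax" and st': "standing D' S' tmin tmax'"
    and eq: "\<forall>\<sigma>\<ge>0. RR D S tmin tmax u (-\<sigma>) = RR D' S' tmin tmax' u (-\<sigma>)"
  shows "Sup ((\<lambda>y. u \<bullet> y) ` D') \<le> Sup ((\<lambda>y. u \<bullet> y) ` D)"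
proof (rule ccontr)
  define h where "h = Sup ((\<lambda>y. u \<bullet> y) ` D)"
  define h' where "h' = Sup ((\<lambda>y. u \<bullet> y) ` D')"
  assume "\<not> Sup ((\<lambda>y. u \<bullet> y) ` D') \<le> Sup ((\<lambda>y. u \<bullet> y) ` D)"
  then have hh: "h < h'" unfolding h_def h'_def by simp
  define e where "e = (h' - h) / 2"
  have e: "e > 0" unfolding e_def using hh by simp
  obtain C where C: "\<forall>\<sigma>\<ge>0. RR D S tmin tmax u (-\<sigma>) \<le> C * exp (\<sigma> * (h - tmin))"
    using upper_bound[OF st] unfolding h_def by blast
  obtain c where c: "c > 0" "\<forall>\<sigma>\<ge>0. c * exp (\<sigma> * (h' - tmin - e)) \<le> RR D' S' tmin tmax' u (-\<sigma>)"
    using lower_bound[OF st' e] unfolding h'_def by blast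
  define \<sigma> where "\<sigma> = (\<bar>C\<bar> / c + 1) / e"
  have s0: "\<sigma> \<ge> 0" unfolding \<sigma>_def using c e by simp
  have "c * exp (\<sigma> * (h' - tmin - e)) \<le> RR D' S' tmin tmax' u (-\<sigma>)" using c(2) s0 by blast
  also have "\<dots> = RR D S tmin tmax u (-\<sigma>)" using eq s0 by simp
  also have "\<dots> \<le> C * exp (\<sigma> * (h - tmin))" using C s0 by blast
  finally have "c * exp (\<sigma> * (h' - tmin - e)) \<le> C * exp (\<sigma> * (h - tmin))" .
  moreover have "exp (\<sigma> * (h' - tmin - e)) = exp (\<sigma> * (h - tmin)) * exp (\<sigma> * e)"
  proof -
    have ee: "\<sigma> * (h' - tmin - e) = \<sigma> * (h - tmin) + \<sigma> * e" unfolding e_def by (simp add: field_simps)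
    show ?thesis unfolding ee exp_add by (rule refl)
  qed
  ultimately have "(c * exp (\<sigma> * e)) * exp (\<sigma> * (h - tmin)) \<le> C * exp (\<sigma> * (h - tmin))"
    by (simp add: mult_ac)
  then have le: "c * exp (\<sigma> * e) \<le> C" by simp
  have "1 + \<sigma> * e \<le> exp (\<sigma> * e)" by (rule exp_ge_add_one_self)
  then have "c * (1 + \<sigma> * e) \<le> c * exp (\<sigma> * e)" using c(1) by simp
  moreover have "\<sigma> * e = \<bar>C\<bar> / c + 1" unfolding \<sigma>_def using e by simp
  moreover have "c * (\<bar>C\<bar> / c + 1) = \<bar>C\<bar> + c" using c(1) by (simp add: field_simps)
  ultimately have "c + \<bar>C\<bar> + c \<le> C" using le by (simp add: distrib_left)
  then show False using c(1) by linarith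
qed



lemma hull_sub:
  fixes D D' :: "(real^3) set"
  assumes bD: "bounded D" and bD': "bounded D'" and ne': "D' \<noteq> {}"
    and le: "\<forall>u. norm u = 1 \<longrightarrow> Sup ((\<lambda>y. u \<bullet> y) ` D) \<le> Sup ((\<lambda>y. u \<bullet> y) ` D')"
  shows "closure (convex hull D) \<subseteq> closure (convex hull D')"
proof
  fix z assume z: "z \<in> closure (convex hull D)"
  show "z \<in> closure (convex hull D')"
  proof (rule ccontr)
    assume nz: "z \<notin> closure (convex hull D')"
    obtain a b where ab: "inner a z < b" "\<forall>x\<in>closure (convex hull D'). inner a x > b"
      using separating_hyperplane_closed_point[OF _ _ nz] by auto
    obtain y0 where y0: "y0 \<in> D'" using ne' by auto
    have y0c: "y0 \<in> closure (convex hull D')" by (rule subsetD[OF closure_subset hull_inc[OF y0]])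
    have a0: "a \<noteq> 0"
    proof
      assume "a = 0"
      then show False using ab(1) bspec[OF ab(2) y0c] by simp
    qed
    then have na: "norm a > 0" by simp
    define u where "u = - (1 / norm a) *\<^sub>R a"
    have nu: "norm u = 1" unfolding u_def using na by simp
    define c where "c = - b / norm a"
    have uy: "u \<bullet> x < c" if "x \<in> closure (convex hull D')" for x
    proof -
      have "b < inner a x" using ab that by auto
      then have "- inner a x / norm a < - b / norm a" using na by (simp add: divide_strict_right_mono)
      then show ?thesis unfolding u_def c_def by (simp add: inner_commute)
    qed
    have "Sup ((\<lambda>y. u \<bullet> y) ` D') \<le> c"
    proof (rule cSup_least)
      show "(\<lambda>y. u \<bullet> y) ` D' \<noteq> {}" using ne' by simp
      fix x assume "x \<in> (\<lambda>y. u \<bullet> y) ` D'"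
      then obtain y where y: "y \<in> D'" "x = u \<bullet> y" by blast
      have "y \<in> closure (convex hull D')" by (rule subsetD[OF closure_subset hull_inc[OF y(1)]])
      then show "x \<le> c" using uy y(2) by (simp add: less_imp_le)
    qed
    then have sD: "Sup ((\<lambda>y. u \<bullet> y) ` D) \<le> c" using le nu by (meson order_trans)
    have "D \<subseteq> {x. inner u x \<le> c}"
    proof
      fix x assume x: "x \<in> D"
      have "u \<bullet> x \<le> Sup ((\<lambda>y. u \<bullet> y) ` D)"
        by (rule cSup_upper) (use x dot_bdd[OF bD] in auto)
      then show "x \<in> {x. inner u x \<le> c}" using sD by simp
    qed
    then have "convex hull D \<subseteq> {x. inner u x \<le> c}"
      by (rule hull_minimal) (rule convex_halfspace_le)
    then have "closure (convex hull D) \<subseteq> {x. inner u x \<le> c}"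
      by (rule closure_minimal) (rule closed_halfspace_le)
    then have "u \<bullet> z \<le> c" using z by auto
    then have "- inner a z / norm a \<le> - b / norm a" unfolding u_def c_def by (simp add: inner_commute)
    then have "b \<le> inner a z" using na by (simp add: divide_le_cancel)
    then show False using ab by simp
  qed
qed



lemma ff_Phi:
  assumes st: "standing D S tmin tmax"
  shows "far_field D S tmin tmax u k = complex_of_real (1 / sqrt (2 * pi)) * Phi D S tmin tmax u (\<i> * complex_of_real k)"
proof -
  have e: "\<And>x. exp (\<i> * complex_of_real (k * x)) = exp (\<i> * complex_of_real k * complex_of_real x)"
    by (simp add: mult.assoc)
  have Tl: "{tmin..tmax} \<in> sets lebesgue" by simp
  show ?thesis
    unfolding far_field_def Phi_def JJ_def II_def
    by (simp only: set_int_restrict[OF standing_basic(1)[OF st]] set_int_restrict[OF Tl] e)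
qed




theorem mainTheorem8:
  fixes D D' :: "(real^3) set" and S S' :: "real^3 \<Rightarrow> real \<Rightarrow> real"
    and tmin tmax tmax' kmin kmax :: real
  assumes "standing D S tmin tmax"
    and "standing D' S' tmin tmax'"
    and "0 \<le> kmin" and "kmin < kmax"
    and "\<forall>xh\<in>sphere 0 1. \<forall>k\<in>{kmin..kmax}.
           far_field D S tmin tmax xh k = far_field D' S' tmin tmax' xh k"
  shows "convex hull D = convex hull D'"
proof -
  note st = assms(1) and st' = assms(2)
  have supeq: "Sup ((\<lambda>y. u \<bullet> y) ` D) = Sup ((\<lambda>y. u \<bullet> y) ` D')" if u: "norm u = 1" for u
  proof -
    have us: "u \<in> sphere 0 1" using u by simp
    have nz: "complex_of_real (1 / sqrt (2 * pi)) \<noteq> 0" by simp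
    have "\<forall>k\<in>{kmin..kmax}. Phi D S tmin tmax u (\<i> * complex_of_real k) = Phi D' S' tmin tmax' u (\<i> * complex_of_real k)"
    proof
      fix k assume k: "k \<in> {kmin..kmax}"
      have "complex_of_real (1 / sqrt (2 * pi)) * Phi D S tmin tmax u (\<i> * complex_of_real k)
          = complex_of_real (1 / sqrt (2 * pi)) * Phi D' S' tmin tmax' u (\<i> * complex_of_real k)"
        using assms(5) us k unfolding ff_Phi[OF st] ff_Phi[OF st'] by blast
      then show "Phi D S tmin tmax u (\<i> * complex_of_real k) = Phi D' S' tmin tmax' u (\<i> * complex_of_real k)"
        using nz by simp
    qed
    then have all: "Phi D S tmin tmax u w = Phi D' S' tmin tmax' u w" for w
      by (rule Phi_eq_all[OF st st' assms(4)])
    have RReq: "RR D S tmin tmax u \<sigma> = RR D' S' tmin tmax' u \<sigma>" for \<sigma>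
      using all[of "complex_of_real \<sigma>"] unfolding Phi_real by simp
    have "Sup ((\<lambda>y. u \<bullet> y) ` D') \<le> Sup ((\<lambda>y. u \<bullet> y) ` D)"
      by (rule sup_le[OF st st']) (simp add: RReq)
    moreover have "Sup ((\<lambda>y. u \<bullet> y) ` D) \<le> Sup ((\<lambda>y. u \<bullet> y) ` D')"
      by (rule sup_le[OF st' st]) (simp add: RReq)
    ultimately show ?thesis by simp
  qed
  have c1: "closure (convex hull D) \<subseteq> closure (convex hull D')"
    by (rule hull_sub[OF standing_basic(2)[OF st] standing_basic(2)[OF st'] standing_basic(6)[OF st']])
       (simp add: supeq)
  have c2: "closure (convex hull D') \<subseteq> closure (convex hull D)"
    by (rule hull_sub[OF standing_basic(2)[OF st'] standing_basic(2)[OF st] standing_basic(6)[OF st]])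
       (simp add: supeq)
  have ce: "closure (convex hull D) = closure (convex hull D')" using c1 c2 by blast
  have o1: "open (convex hull D)" using standing_basic(5)[OF st] by (rule open_convex_hull)
  have o2: "open (convex hull D')" using standing_basic(5)[OF st'] by (rule open_convex_hull)
  have "convex hull D = interior (closure (convex hull D))"
    using convex_interior_closure[OF convex_convex_hull, of D] interior_open[OF o1] by simp
  also have "\<dots> = interior (closure (convex hull D'))" using ce by simp
  also have "\<dots> = convex hull D'"
    using convex_interior_closure[OF convex_convex_hull, of D'] interior_open[OF o2] by simp
  finally show ?thesis .
qed


end
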